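(* Let $n\ge2$, $1\le m,k\le n$, and set $A=k$, $B=k-m$. Then: (a) The presentation $\mathcal{H}_n(m,k)$ satisfies C(3)-T(6) if and only if $tA\not\equiv0$ and $tB\not\equiv0$ for all $1\le t\le5$, and $A\not\equiv\pm B$, $A\not\equiv\pm2B$, $B\not\equiv\pm2A$ (all congruences mod $n$); moreover, in this case it is a non-special C(3)-T(6) presentation. (b) The presentation $\mathcal{H}_n(m,k)$ satisfies C(3)-T(7) if and only if $tA\not\equiv0$ and $tB\not\equiv0$ for all $1\le t\le6$, and $A\not\equiv\pm2B$, $A\not\equiv\pm3B$, $B\not\equiv\pm2A$, $B\not\equiv\pm3A$, $2A\not\equiv\pm2B$ (all congruences mod $n$).
   Context: $\mathcal{H}_n(m,k)=\langle x_1,\ldots,x_n\mid x_ix_{i+m}x_{i+k}^{-1}\ (1\le i\le n)\rangle$ (subscripts mod $n$), defining the group $H_n(m,k)$. The C($p$) and T($q$) conditions are the standard small cancellation conditions (Lyndon–Schupp, Ch. V) for the symmetrized closure of the relators. The star graph of a presentation $\langle X\mid R\rangle$ has vertex set $X\cup X^{-1}$ and an edge from $x$ to $y$ for each distinct word $x^{-1}yu$ ($x\ne y$) that is a cyclic permutation of a relator or its inverse; for presentations with all relators of length at least 3, C(3)-T($q$) ($q>4$) holds iff the star graph has no cycle of length less than $q$. A C(3)-T(6) presentation is special if every relator has length 3 and the star graph is isomorphic to the incidence graph of a finite projective plane. *)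

theory Defs
  imports Main "HOL-Number_Theory.Cong"
begin

text \<open>A letter is a generator together with a sign (True = the generator,
False = its inverse).  A word is a list of letters.\<close>

type_synonym 'a letter = "'a \<times> bool"
type_synonym 'a word = "'a letter list"

definition linv :: "'a letter \<Rightarrow> 'a letter" where
  "linv x = (fst x, \<not> snd x)"

definition winv :: "'a word \<Rightarrow> 'a word" where
  "winv w = rev (map linv w)"

definition freely_reduced :: "'a word \<Rightarrow> bool" where
  "freely_reduced w \<longleftrightarrow> (\<forall>i. Suc i < length w \<longrightarrow> w ! Suc i \<noteq> linv (w ! i))"

definition cyclically_reduced :: "'a word \<Rightarrow> bool" where
  "cyclically_reduced w \<longleftrightarrow> freely_reduced w \<and> (w \<noteq> [] \<longrightarrow> last w \<noteq> linv (hd w))"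

definition symmetrized_closure :: "'a word set \<Rightarrow> 'a word set" where
  "symmetrized_closure R = {rotate j r | r j. r \<in> R \<union> winv ` R}"

definition is_piece :: "'a word set \<Rightarrow> 'a word \<Rightarrow> bool" where
  "is_piece S b \<longleftrightarrow>
     (\<exists>r1\<in>S. \<exists>r2\<in>S. r1 \<noteq> r2 \<and> (\<exists>c1. r1 = b @ c1) \<and> (\<exists>c2. r2 = b @ c2))"

definition cond_C :: "'a word set \<Rightarrow> nat \<Rightarrow> bool" where
  "cond_C S p \<longleftrightarrow>
     (\<forall>r\<in>S. \<not> (\<exists>bs. length bs < p \<and> (\<forall>b\<in>set bs. is_piece S b) \<and> r = concat bs))"

definition cond_T :: "'a word set \<Rightarrow> nat \<Rightarrow> bool" where
  "cond_T S q \<longleftrightarrow>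
     (\<forall>h rs. 3 \<le> h \<and> h < q \<and> length rs = h \<and> set rs \<subseteq> S \<and>
        (\<forall>i<h. rs ! (Suc i mod h) \<noteq> winv (rs ! i))
        \<longrightarrow> (\<exists>i<h. freely_reduced (rs ! i @ rs ! (Suc i mod h))))"

text \<open>A presentation \<open>\<langle>X | R\<rangle>\<close> is C(p)-T(q) if its relators are cyclically reduced
words over X (so that the symmetrized closure is a symmetrized set in the sense of
Lyndon--Schupp) and the symmetrized closure satisfies C(p) and T(q).\<close>

definition C_T_presentation :: "'a set \<Rightarrow> 'a word set \<Rightarrow> nat \<Rightarrow> nat \<Rightarrow> bool" where
  "C_T_presentation X R p q \<longleftrightarrow>
     (\<forall>r\<in>R. cyclically_reduced r \<and> fst ` set r \<subseteq> X) \<and>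
     cond_C (symmetrized_closure R) p \<and> cond_T (symmetrized_closure R) q"

text \<open>Vertices: X \<union> X^-1.  A (directed) edge from x to y for each distinct word
x^-1 y u (x \<noteq> y) which is a cyclic permutation of a relator or its inverse; the edge
is the word itself.\<close>

definition star_vertices :: "'a set \<Rightarrow> 'a letter set" where
  "star_vertices X = X \<times> (UNIV :: bool set)"

definition star_edges :: "'a word set \<Rightarrow> 'a word set" where
  "star_edges R = {w \<in> symmetrized_closure R. 2 \<le> length w \<and> linv (w ! 0) \<noteq> w ! 1}"

definition star_tail :: "'a word \<Rightarrow> 'a letter" where
  "star_tail w = linv (w ! 0)"

definition star_head :: "'a word \<Rightarrow> 'a letter" where
  "star_head w = w ! 1"

definition finite_projective_plane :: "'p set \<Rightarrow> 'l set \<Rightarrow> ('p \<times> 'l) set \<Rightarrow> bool" where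
  "finite_projective_plane P L I \<longleftrightarrow>
     finite P \<and> finite L \<and> I \<subseteq> P \<times> L \<and>
     (\<forall>p\<in>P. \<forall>p'\<in>P. p \<noteq> p' \<longrightarrow> (\<exists>!l. l \<in> L \<and> (p, l) \<in> I \<and> (p', l) \<in> I)) \<and>
     (\<forall>l\<in>L. \<forall>l'\<in>L. l \<noteq> l' \<longrightarrow> (\<exists>!p. p \<in> P \<and> (p, l) \<in> I \<and> (p, l') \<in> I)) \<and>
     (\<exists>Q. Q \<subseteq> P \<and> card Q = 4 \<and> (\<forall>l\<in>L. card {p\<in>Q. (p, l) \<in> I} \<le> 2))"

text \<open>Incidence graph (as a symmetric digraph: each undirected edge appears in both
directions, matching the star graph where the edges x^-1 y u and y^-1 x u^-1 pair up).\<close>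

definition incidence_edges :: "('p \<times> 'l) set \<Rightarrow> (('p + 'l) \<times> ('p + 'l)) set" where
  "incidence_edges I = {(Inl p, Inr l) | p l. (p, l) \<in> I} \<union> {(Inr l, Inl p) | p l. (p, l) \<in> I}"

definition special_presentation :: "'a set \<Rightarrow> 'a word set \<Rightarrow> bool" where
  "special_presentation X R \<longleftrightarrow>
     (\<forall>r\<in>R. length r = 3) \<and>
     (\<exists>(P :: nat set) (L :: nat set) I. finite_projective_plane P L I \<and>
        (\<exists>f g. bij_betw f (star_vertices X) (P <+> L) \<and>
               bij_betw g (star_edges R) (incidence_edges I) \<and>
               (\<forall>w\<in>star_edges R. g w = (f (star_tail w), f (star_head w)))))"

definition H_gens :: "nat \<Rightarrow> nat set" where
  "H_gens n = {..<n}"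

definition H_rels :: "nat \<Rightarrow> nat \<Rightarrow> nat \<Rightarrow> nat word set" where
  "H_rels n m k = {[(i, True), ((i + m) mod n, True), ((i + k) mod n, False)] | i. i < n}"

end

theory Submission
  imports Defs "HOL-Number_Theory.Cong"
begin

datatype fam = W1 | W2 | W3 | V1 | V2 | V3

fun hs :: "fam \<Rightarrow> bool" where
 "hs W1 = True" | "hs W2 = True" | "hs W3 = False" | "hs V1 = True" | "hs V2 = False" | "hs V3 = False"
fun ls :: "fam \<Rightarrow> bool" where
 "ls W1 = False" | "ls W2 = True" | "ls W3 = True" | "ls V1 = False" | "ls V2 = True" | "ls V3 = False"
fun invf :: "fam \<Rightarrow> fam" where
 "invf W1 = V1" | "invf V1 = W1" | "invf W2 = V3" | "invf V3 = W2" | "invf W3 = V2" | "invf V2 = W3"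
definition allowed :: "fam \<Rightarrow> fam \<Rightarrow> bool" where
 "allowed f g \<longleftrightarrow> hs g \<noteq> ls f \<and> g \<noteq> invf f"
fun ca :: "fam \<Rightarrow> int" where
 "ca W1 = 1" | "ca W2 = -1" | "ca W3 = 0" | "ca V1 = -1" | "ca V2 = 0" | "ca V3 = 1"
fun cb :: "fam \<Rightarrow> int" where
 "cb W1 = 0" | "cb W2 = 1" | "cb W3 = -1" | "cb V1 = 0" | "cb V2 = 1" | "cb V3 = -1"
definition fams :: "fam list" where "fams = [W1,W2,W3,V1,V2,V3]"
lemma fams_all: "f \<in> set fams" by (cases f) (auto simp: fams_def)
definition succs :: "fam \<Rightarrow> fam list" where "succs f = filter (allowed f) fams"
fun paths :: "nat \<Rightarrow> fam \<Rightarrow> fam list list" where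
  "paths 0 f = [[f]]"
| "paths (Suc l) f = concat (map (\<lambda>g. map ((#) f) (paths l g)) (succs f))"
definition cw :: "nat \<Rightarrow> fam list list" where
  "cw h = concat (map (\<lambda>f. filter (\<lambda>xs. allowed (last xs) f) (paths (h - 1) f)) fams)"
definition sab :: "fam list \<Rightarrow> int \<times> int" where
  "sab xs = (sum_list (map ca xs), sum_list (map cb xs))"

lemma succs_simps: "succs W1 = [W1,W2]" "succs W2 = [W3,V2]" "succs W3 = [W3,V3]"
  "succs V1 = [W2,V1]" "succs V2 = [V2,V3]" "succs V3 = [W1,V1]"
  by (simp_all add: succs_def fams_def allowed_def)


definition cvalid :: "fam list \<Rightarrow> bool" where
  "cvalid xs \<longleftrightarrow> (\<forall>j<length xs. allowed (xs!j) (xs!(Suc j mod length xs)))"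

lemma paths_sound:
  "xs \<in> set (paths l f) \<Longrightarrow> length xs = Suc l \<and> xs ! 0 = f \<and> (\<forall>j<l. allowed (xs!j) (xs!Suc j))"
proof (induction l arbitrary: f xs)
  case 0
  then show ?case by simp
next
  case (Suc l)
  then obtain g ys where g: "g \<in> set (succs f)" and ys: "ys \<in> set (paths l g)" and xs: "xs = f # ys"
    by auto
  from Suc.IH[OF ys] have IH: "length ys = Suc l" "ys ! 0 = g" "\<forall>j<l. allowed (ys!j) (ys!Suc j)" by auto
  have "allowed f g" using g by (simp add: succs_def)
  show ?case
  proof (intro conjI allI impI)
    fix j assume "j < Suc l"
    then show "allowed (xs!j) (xs!Suc j)"
      using IH \<open>allowed f g\<close> xs by (cases j) auto
  qed (use IH xs in auto)
qed

lemma paths_complete: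
  "length xs = Suc l \<Longrightarrow> xs ! 0 = f \<Longrightarrow> (\<forall>j<l. allowed (xs!j) (xs!Suc j)) \<Longrightarrow> xs \<in> set (paths l f)"
proof (induction l arbitrary: f xs)
  case 0
  then show ?case by (cases xs) auto
next
  case (Suc l)
  from Suc.prems(1) obtain y ys where xs0: "xs = y # ys" by (cases xs) auto
  with Suc.prems(2) have xs: "xs = f # ys" by simp
  with Suc.prems have ly: "length ys = Suc l" by simp
  have al: "allowed f (ys!0)" using Suc.prems(3) xs by (metis nth_Cons_0 nth_Cons_Suc zero_less_Suc)
  have "ys \<in> set (paths l (ys!0))"
    apply (rule Suc.IH[OF ly refl])
    using Suc.prems(3) xs by auto
  moreover have "ys!0 \<in> set (succs f)" using al by (simp add: succs_def fams_all)
  ultimately show ?case using xs by auto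
qed

lemma cw_sound:
  assumes "xs \<in> set (cw h)" "1 \<le> h"
  shows "length xs = h \<and> cvalid xs"
proof -
  from assms obtain f where xs: "xs \<in> set (paths (h-1) f)" and al: "allowed (last xs) f"
    by (auto simp: cw_def)
  from paths_sound[OF xs] have P: "length xs = h" "xs!0 = f" "\<forall>j<h-1. allowed (xs!j) (xs!Suc j)"
    using assms(2) by auto
  have "cvalid xs"
    unfolding cvalid_def
  proof (intro allI impI)
    fix j assume j: "j < length xs"
    show "allowed (xs!j) (xs!(Suc j mod length xs))"
    proof (cases "Suc j < h")
      case True then show ?thesis using P by auto
    next
      case False
      then have "Suc j = length xs" using j P by auto
      then have "j = h - 1" "Suc j mod length xs = 0" using P by auto
      moreover have "xs \<noteq> []" using P assms(2) by auto
      ultimately show ?thesis using al P assms(2) by (simp add: last_conv_nth)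
    qed
  qed
  with P show ?thesis by simp
qed

lemma cw_complete:
  assumes "length xs = h" "1 \<le> h" "cvalid xs"
  shows "xs \<in> set (cw h)"
proof -
  have "xs \<in> set (paths (h-1) (xs!0))"
  proof (rule paths_complete)
    show "length xs = Suc (h - 1)" using assms by simp
    show "\<forall>j<h - 1. allowed (xs ! j) (xs ! Suc j)"
    proof (intro allI impI)
      fix j assume "j < h - 1"
      then have "Suc j mod h = Suc j" "j < length xs" using assms by auto
      then show "allowed (xs ! j) (xs ! Suc j)" using assms(3) assms(1) unfolding cvalid_def by metis
    qed
  qed simp
  moreover have "allowed (last xs) (xs!0)"
  proof -
    have "h - 1 < length xs" using assms by simp
    then have "allowed (xs!(h-1)) (xs!(Suc (h-1) mod length xs))"
      using assms(3) unfolding cvalid_def by blast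
    moreover have "Suc (h-1) mod h = 0" using assms by simp
    moreover have "xs \<noteq> []" using assms by auto
    ultimately show ?thesis using assms by (auto simp add: last_conv_nth)
  qed
  ultimately show ?thesis using fams_all[of "xs!0"] by (auto simp: cw_def)
qed

lemma fr_Nil: "freely_reduced []" by (simp add: freely_reduced_def)
lemma fr_single: "freely_reduced [x]" by (simp add: freely_reduced_def)
lemma fr_Cons2: "freely_reduced (x # y # xs) \<longleftrightarrow> y \<noteq> linv x \<and> freely_reduced (y # xs)"
proof
  assume a: "freely_reduced (x # y # xs)"
  show "y \<noteq> linv x \<and> freely_reduced (y # xs)"
  proof
    show "y \<noteq> linv x" using a[unfolded freely_reduced_def, rule_format, of 0] by simp
    show "freely_reduced (y # xs)" unfolding freely_reduced_def
    proof (intro allI impI)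
      fix i assume "Suc i < length (y # xs)"
      then show "(y # xs) ! Suc i \<noteq> linv ((y # xs) ! i)"
        using a[unfolded freely_reduced_def, rule_format, of "Suc i"] by simp
    qed
  qed
next
  assume a: "y \<noteq> linv x \<and> freely_reduced (y # xs)"
  show "freely_reduced (x # y # xs)" unfolding freely_reduced_def
  proof (intro allI impI)
    fix i assume i: "Suc i < length (x # y # xs)"
    show "(x # y # xs) ! Suc i \<noteq> linv ((x # y # xs) ! i)"
    proof (cases i)
      case 0 then show ?thesis using a by simp
    next
      case (Suc j)
      then show ?thesis using a i unfolding freely_reduced_def by auto
    qed
  qed
qed

lemma len3: "length xs = 3 \<Longrightarrow> \<exists>a b c. xs = [a,b,c]"
  by (cases xs; cases "tl xs"; cases "tl (tl xs)") (auto simp: numeral_eq_Suc)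

lemma fr_app3:
  assumes "length u = 3" "length v = 3"
  shows "freely_reduced (u @ v) \<longleftrightarrow> freely_reduced u \<and> freely_reduced v \<and> v!0 \<noteq> linv (u!2)"
proof -
  obtain a b c where u: "u = [a,b,c]" using len3[OF assms(1)] by blast
  obtain d e f where v: "v = [d,e,f]" using len3[OF assms(2)] by blast
  show ?thesis unfolding u v by (simp add: fr_Cons2 fr_single) blast
qed

lemma linv_simp[simp]: "linv (a, s) = (a, \<not> s)" by (simp add: linv_def)

lemma mod_cancel_lt:
  fixes i j c n :: nat
  assumes "i < n" "j < n" "(i + c) mod n = (j + c) mod n"
  shows "i = j"
proof -
  have "[c + i = c + j] (mod n)" using assms(3) by (simp add: cong_def add.commute)
  then have "[i = j] (mod n)" by (simp add: cong_add_lcancel_nat)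
  then show ?thesis using assms by (simp add: cong_def)
qed

lemma mod_eq_dvd: "((a::nat) mod n = b mod n) \<longleftrightarrow> int n dvd (int a - int b)"
  by (metis cong_def cong_int_iff cong_iff_dvd_diff)

lemma sum_rot:
  assumes "0 < h"
  shows "(\<Sum>j<h. g (Suc j mod h)) = (\<Sum>j<h. (g j :: 'a::comm_monoid_add))"
proof -
  obtain h' where h: "h = Suc h'" using assms by (cases h) auto
  have "(\<Sum>j<Suc h'. g (Suc j mod Suc h')) = (\<Sum>j<h'. g (Suc j mod Suc h')) + g 0"
    by (simp add: sum.lessThan_Suc)
  also have "(\<Sum>j<h'. g (Suc j mod Suc h')) = (\<Sum>j<h'. g (Suc j))"
    by (rule sum.cong) auto
  also have "(\<Sum>j<h'. g (Suc j)) + g 0 = (\<Sum>j<Suc h'. g j)"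
    by (simp only: sum.lessThan_Suc_shift add.commute)
  finally show ?thesis using h by simp
qed

lemma sum_list_map_nth: "sum_list (map g xs) = (\<Sum>l<length xs. g (xs!l))"
  by (simp add: sum_list_sum_nth atLeast0LessThan)

locale HP =
  fixes n m k :: nat
  assumes npos: "0 < n"
begin

fun oH :: "fam \<Rightarrow> nat" where
  "oH W1 = 0" | "oH W2 = m" | "oH W3 = k" | "oH V1 = k" | "oH V2 = m" | "oH V3 = 0"
fun oL :: "fam \<Rightarrow> nat" where
  "oL W1 = k" | "oL W2 = 0" | "oL W3 = m" | "oL V1 = 0" | "oL V2 = k" | "oL V3 = m"

fun wd :: "fam \<Rightarrow> nat \<Rightarrow> nat word" where
  "wd W1 i = [(i,True),((i+m) mod n,True),((i+k) mod n,False)]"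
| "wd W2 i = [((i+m) mod n,True),((i+k) mod n,False),(i,True)]"
| "wd W3 i = [((i+k) mod n,False),(i,True),((i+m) mod n,True)]"
| "wd V1 i = [((i+k) mod n,True),((i+m) mod n,False),(i,False)]"
| "wd V2 i = [((i+m) mod n,False),(i,False),((i+k) mod n,True)]"
| "wd V3 i = [(i,False),((i+k) mod n,True),((i+m) mod n,False)]"

abbreviation "S \<equiv> symmetrized_closure (H_rels n m k)"

lemma wd_len[simp]: "length (wd f i) = 3" by (cases f) auto

lemma rot3: "length xs = 3 \<Longrightarrow> rotate j xs \<in> {xs, rotate1 xs, rotate1 (rotate1 xs)}"
proof -
  assume l: "length xs = 3"
  have "rotate j xs = rotate (j mod 3) xs" using l by (metis rotate_conv_mod)
  moreover have "j mod 3 = 0 \<or> j mod 3 = Suc 0 \<or> j mod 3 = Suc (Suc 0)" by auto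
  moreover have "rotate (Suc 0) xs = rotate1 xs" "rotate (Suc (Suc 0)) xs = rotate1 (rotate1 xs)"
    by (simp_all only: rotate_Suc rotate0 id_apply)
  ultimately show ?thesis by auto
qed

lemma winv_wd: "winv (wd f i) = wd (invf f) i"
  by (cases f) (auto simp: winv_def)

lemma H_rels_eq: "H_rels n m k = wd W1 ` {..<n}"
  by (auto simp: H_rels_def)

lemma S_char: "S = {wd f i | f i. i < n}"
proof
  show "S \<subseteq> {wd f i | f i. i < n}"
  proof
    fix w assume "w \<in> S"
    then obtain r j where w: "w = rotate j r" and r: "r \<in> H_rels n m k \<union> winv ` H_rels n m k"
      by (auto simp: symmetrized_closure_def)
    from r obtain i where i: "i < n" and "r = wd W1 i \<or> r = wd V1 i"
      by (auto simp del: wd.simps simp: H_rels_eq winv_wd)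
    then have "w \<in> {wd W1 i, wd W2 i, wd W3 i} \<or> w \<in> {wd V1 i, wd V2 i, wd V3 i}"
      using rot3[of r j] w by auto
    then show "w \<in> {wd f i | f i. i < n}" using i by blast
  qed
next
  show "{wd f i | f i. i < n} \<subseteq> S"
  proof
    fix w assume "w \<in> {wd f i | f i. i < n}"
    then obtain f i where w: "w = wd f i" and i: "i < n" by auto
    have r1: "wd W1 i \<in> H_rels n m k \<union> winv ` H_rels n m k" using i by (auto simp: H_rels_eq)
    have "wd W1 i \<in> H_rels n m k" using i by (simp del: wd.simps add: H_rels_eq)
    then have "winv (wd W1 i) \<in> winv ` H_rels n m k" by (rule imageI)
    then have r2: "wd V1 i \<in> H_rels n m k \<union> winv ` H_rels n m k"
      by (simp del: wd.simps add: winv_wd)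
    have "wd W1 i = rotate 0 (wd W1 i)" "wd W2 i = rotate 1 (wd W1 i)" "wd W3 i = rotate 2 (wd W1 i)"
      "wd V1 i = rotate 0 (wd V1 i)" "wd V2 i = rotate 1 (wd V1 i)" "wd V3 i = rotate 2 (wd V1 i)"
      by (simp_all add: numeral_eq_Suc)
    then show "w \<in> S" using r1 r2 w unfolding symmetrized_closure_def
      by (cases f) blast+
  qed
qed

lemma wd_nth0: "i < n \<Longrightarrow> wd f i ! 0 = ((i + oH f) mod n, hs f)"
  by (cases f) auto
lemma wd_nth2: "i < n \<Longrightarrow> wd f i ! 2 = ((i + oL f) mod n, ls f)"
  by (cases f) auto
lemma wd_fam: "wd f i = wd g j \<Longrightarrow> f = g"
  by (cases f; cases g) auto
lemma oH_invf: "oH (invf f) = oL f" by (cases f) auto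

lemma modkm: "((i + a) mod n = (i + b) mod n) \<longleftrightarrow> a mod n = b mod n"
  by (metis cong_def cong_add_lcancel_nat)
lemma modk: "i < n \<Longrightarrow> ((i + a) mod n = i) \<longleftrightarrow> a mod n = 0"
  using modkm[of i a 0] by simp

lemma fr_wd:
  assumes "k mod n \<noteq> 0" "k mod n \<noteq> m mod n" "i < n"
  shows "freely_reduced (wd f i)"
proof -
  have a: "(i + k) mod n \<noteq> i" "(i + k) mod n \<noteq> (i + m) mod n" "(i + m) mod n \<noteq> (i + k) mod n"
    using assms modk[of i k] modkm[of i k m] by auto
  show ?thesis using a by (cases f) (simp_all add: fr_Cons2 fr_single)
qed

lemma junction:
  assumes "k mod n \<noteq> 0" "k mod n \<noteq> m mod n" "i < n" "j < n"
  shows "(\<not> freely_reduced (wd f i @ wd g j)) \<longleftrightarrow>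
           (hs g = (\<not> ls f) \<and> (j + oH g) mod n = (i + oL f) mod n)"
proof -
  have "(\<not> freely_reduced (wd f i @ wd g j)) \<longleftrightarrow> wd g j ! 0 = linv (wd f i ! 2)"
    using fr_app3[of "wd f i" "wd g j"] fr_wd[OF assms(1,2,3)] fr_wd[OF assms(1,2,4)] by simp
  also have "\<dots> \<longleftrightarrow> (hs g = (\<not> ls f) \<and> (j + oH g) mod n = (i + oL f) mod n)"
    by (simp only: wd_nth0[OF assms(4)] wd_nth2[OF assms(3)] linv_simp prod.inject) blast
  finally show ?thesis .
qed

lemma dl: "int (oL f) - int (oH f) = ca f * int k + cb f * (int k - int m)"
  by (cases f) auto

end

context HP begin

lemma walk_to_rels:
  assumes cr: "k mod n \<noteq> 0" "k mod n \<noteq> m mod n"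
    and fs: "length fs = h" "1 \<le> h" "cvalid fs"
    and dv: "int n dvd (fst (sab fs) * int k + snd (sab fs) * (int k - int m))"
  shows "\<exists>rs. length rs = h \<and> set rs \<subseteq> S \<and> (\<forall>i<h. rs ! (Suc i mod h) \<noteq> winv (rs ! i)) \<and>
              (\<forall>i<h. \<not> freely_reduced (rs ! i @ rs ! (Suc i mod h)))"
proof -
  define D where "D j = (\<Sum>l<j. int (oL (fs!l)) - int (oH (fs!l)))" for j
  define X where "X j = nat ((D j - int (oH (fs!j))) mod int n)" for j
  define rs where "rs = map (\<lambda>j. wd (fs!j) (X j)) [0..<h]"
  have Xn: "X j < n" for j
    using npos by (simp add: X_def nat_less_iff)
  have Xi: "int (X j) = (D j - int (oH (fs!j))) mod int n" for j
    using npos by (simp add: X_def)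
  have Dsuc: "D (Suc j) = D j + int (oL (fs!j)) - int (oH (fs!j))" for j
    by (simp add: D_def)
  have Dh: "D h = fst (sab fs) * int k + snd (sab fs) * (int k - int m)"
    by (simp add: D_def dl sab_def sum_list_map_nth fs(1) sum.distrib sum_distrib_right)
  have key: "(X (Suc j mod h) + oH (fs!(Suc j mod h))) mod n = (X j + oL (fs!j)) mod n"
    if j: "j < h" for j
  proof -
    let ?j = "Suc j mod h"
    have L: "int ((X ?j + oH (fs!?j)) mod n) = D ?j mod int n"
      by (simp add: of_nat_mod Xi mod_add_left_eq)
    have R: "int ((X j + oL (fs!j)) mod n) = D (Suc j) mod int n"
    proof -
      have "int ((X j + oL (fs!j)) mod n) = ((D j - int (oH (fs!j))) mod int n + int (oL (fs!j))) mod int n"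
        by (simp add: of_nat_mod Xi)
      also have "\<dots> = (D j - int (oH (fs!j)) + int (oL (fs!j))) mod int n"
        by (rule mod_add_left_eq)
      also have "\<dots> = D (Suc j) mod int n" by (simp add: Dsuc algebra_simps)
      finally show ?thesis .
    qed
    have "D ?j mod int n = D (Suc j) mod int n"
    proof (cases "Suc j < h")
      case True then show ?thesis by simp
    next
      case False
      then have "Suc j = h" using j by simp
      moreover have "D 0 = 0" by (simp add: D_def)
      ultimately show ?thesis using Dh dv by simp
    qed
    then show ?thesis using L R by simp
  qed
  have rsi: "rs ! i = wd (fs!i) (X i)" if "i < h" for i
    using that by (simp add: rs_def)
  have AL: "allowed (fs!i) (fs!(Suc i mod h))" if "i < h" for i
    using fs that by (simp add: cvalid_def)
  show ?thesis
  proof (intro exI conjI allI impI)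
    show "length rs = h" by (simp add: rs_def)
    show "set rs \<subseteq> S" using Xn by (auto simp: rs_def S_char)
  next
    fix i assume i: "i < h"
    have i': "Suc i mod h < h" using i by simp
    show "rs ! (Suc i mod h) \<noteq> winv (rs ! i)"
    proof
      assume "rs ! (Suc i mod h) = winv (rs ! i)"
      then have "wd (fs!(Suc i mod h)) (X (Suc i mod h)) = wd (invf (fs!i)) (X i)"
        using rsi[OF i] rsi[OF i'] by (simp add: winv_wd)
      then have "fs!(Suc i mod h) = invf (fs!i)" by (rule wd_fam)
      then show False using AL[OF i] by (simp add: allowed_def)
    qed
    show "\<not> freely_reduced (rs ! i @ rs ! (Suc i mod h))"
      unfolding rsi[OF i] rsi[OF i'] junction[OF cr Xn Xn]
      using AL[OF i] key[OF i] by (auto simp: allowed_def)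
  qed
qed

lemma rels_to_walk:
  assumes cr: "k mod n \<noteq> 0" "k mod n \<noteq> m mod n"
    and h: "1 \<le> h" and rs: "length rs = h" "set rs \<subseteq> S"
    and ni: "\<forall>i<h. rs ! (Suc i mod h) \<noteq> winv (rs ! i)"
    and nf: "\<forall>i<h. \<not> freely_reduced (rs ! i @ rs ! (Suc i mod h))"
  shows "\<exists>fs\<in>set (cw h). int n dvd (fst (sab fs) * int k + snd (sab fs) * (int k - int m))"
proof -
  have "\<forall>j. \<exists>p. j < h \<longrightarrow> snd p < n \<and> rs!j = wd (fst p) (snd p)"
  proof
    fix j
    show "\<exists>p. j < h \<longrightarrow> snd p < n \<and> rs!j = wd (fst p) (snd p)"
    proof (cases "j < h")
      case True
      then have "rs!j \<in> S" using rs nth_mem by blast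
      then obtain f i where "i < n" "rs!j = wd f i" by (auto simp: S_char)
      then show ?thesis by (intro exI[of _ "(f,i)"]) simp
    qed simp
  qed
  from choice[OF this] obtain P where P0: "\<forall>j. j < h \<longrightarrow> snd (P j) < n \<and> rs!j = wd (fst (P j)) (snd (P j))"
    by blast
  have P: "snd (P j) < n \<and> rs!j = wd (fst (P j)) (snd (P j))" if "j < h" for j
    using P0 that by blast
  define F where "F j = fst (P j)" for j
  define X where "X j = snd (P j)" for j
  have Xn: "X j < n" and rsj: "rs!j = wd (F j) (X j)" if "j < h" for j
    using P[OF that] by (simp_all add: F_def X_def)
  have J: "hs (F (Suc j mod h)) = (\<not> ls (F j)) \<and>
           (X (Suc j mod h) + oH (F (Suc j mod h))) mod n = (X j + oL (F j)) mod n" if j: "j < h" for j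
  proof -
    have j': "Suc j mod h < h" using j by simp
    have "\<not> freely_reduced (rs!j @ rs!(Suc j mod h))" using nf j by blast
    then show ?thesis unfolding rsj[OF j] rsj[OF j'] junction[OF cr Xn[OF j] Xn[OF j']] .
  qed
  have NI: "F (Suc j mod h) \<noteq> invf (F j)" if j: "j < h" for j
  proof
    assume e: "F (Suc j mod h) = invf (F j)"
    have j': "Suc j mod h < h" using j by simp
    have "(X (Suc j mod h) + oL (F j)) mod n = (X j + oL (F j)) mod n"
      using J[OF j] e by (simp add: oH_invf)
    then have "X (Suc j mod h) = X j" by (rule mod_cancel_lt[OF Xn[OF j'] Xn[OF j]])
    then have "rs ! (Suc j mod h) = winv (rs ! j)"
      using rsj[OF j] rsj[OF j'] e by (simp add: winv_wd)
    then show False using ni j by blast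
  qed
  define fs where "fs = map F [0..<h]"
  have "cvalid fs"
    unfolding cvalid_def fs_def using J NI by (auto simp: allowed_def)
  then have fsw: "fs \<in> set (cw h)" using cw_complete[of fs h] h by (simp add: fs_def)
  have "[(\<Sum>j<h. X (Suc j mod h) + oH (F (Suc j mod h))) = (\<Sum>j<h. X j + oL (F j))] (mod n)"
    by (rule cong_sum) (use J in \<open>simp add: cong_def\<close>)
  then have "[(\<Sum>j<h. X j) + (\<Sum>j<h. oH (F j)) = (\<Sum>j<h. X j) + (\<Sum>j<h. oL (F j))] (mod n)"
    using sum_rot[of h "\<lambda>j. X j + oH (F j)"] h by (simp add: sum.distrib)
  then have "[(\<Sum>j<h. oH (F j)) = (\<Sum>j<h. oL (F j))] (mod n)"
    by (simp add: cong_add_lcancel_nat)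
  then have "[int (\<Sum>j<h. oL (F j)) = int (\<Sum>j<h. oH (F j))] (mod int n)"
    using cong_int_iff cong_sym by blast
  then have "int n dvd (\<Sum>j<h. int (oL (F j)) - int (oH (F j)))"
    by (simp add: cong_iff_dvd_diff sum_subtractf)
  also have "(\<Sum>j<h. int (oL (F j)) - int (oH (F j))) = fst (sab fs) * int k + snd (sab fs) * (int k - int m)"
    by (simp add: dl sab_def sum_list_map_nth fs_def sum.distrib sum_distrib_right)
  finally show ?thesis using fsw by blast
qed

lemma T_iff:
  assumes cr: "k mod n \<noteq> 0" "k mod n \<noteq> m mod n"
  shows "cond_T S q \<longleftrightarrow> (\<forall>h. 3 \<le> h \<and> h < q \<longrightarrow>
     (\<forall>fs\<in>set (cw h). \<not> int n dvd (fst (sab fs) * int k + snd (sab fs) * (int k - int m))))"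
proof
  assume T: "cond_T S q"
  show "\<forall>h. 3 \<le> h \<and> h < q \<longrightarrow>
     (\<forall>fs\<in>set (cw h). \<not> int n dvd (fst (sab fs) * int k + snd (sab fs) * (int k - int m)))"
  proof (intro allI impI ballI notI)
    fix h fs assume h: "3 \<le> h \<and> h < q" and fs: "fs \<in> set (cw h)"
      and dv: "int n dvd (fst (sab fs) * int k + snd (sab fs) * (int k - int m))"
    have h1: "1 \<le> h" using h by simp
    from cw_sound[OF fs h1] have "length fs = h" "cvalid fs" by auto
    from walk_to_rels[OF cr this(1) h1 this(2) dv] obtain rs where
      rs: "length rs = h" "set rs \<subseteq> S" "\<forall>i<h. rs ! (Suc i mod h) \<noteq> winv (rs ! i)"
          "\<forall>i<h. \<not> freely_reduced (rs ! i @ rs ! (Suc i mod h))" by blast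
    from T h rs(1,2,3) have "\<exists>i<h. freely_reduced (rs ! i @ rs ! (Suc i mod h))"
      unfolding cond_T_def by blast
    then show False using rs(4) by blast
  qed
next
  assume Q: "\<forall>h. 3 \<le> h \<and> h < q \<longrightarrow>
     (\<forall>fs\<in>set (cw h). \<not> int n dvd (fst (sab fs) * int k + snd (sab fs) * (int k - int m)))"
  show "cond_T S q" unfolding cond_T_def
  proof (intro allI impI)
    fix h rs assume a: "3 \<le> h \<and> h < q \<and> length rs = h \<and> set rs \<subseteq> S \<and>
        (\<forall>i<h. rs ! (Suc i mod h) \<noteq> winv (rs ! i))"
    show "\<exists>i<h. freely_reduced (rs ! i @ rs ! (Suc i mod h))"
    proof (rule ccontr)
      assume "\<not> ?thesis"
      then have nf: "\<forall>i<h. \<not> freely_reduced (rs ! i @ rs ! (Suc i mod h))" by blast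
      have h1: "1 \<le> h" using a by simp
      from rels_to_walk[OF cr h1 _ _ _ nf] a
      obtain fs where "fs \<in> set (cw h)" "int n dvd (fst (sab fs) * int k + snd (sab fs) * (int k - int m))"
        by blast
      then show False using Q a by blast
    qed
  qed
qed

end
definition dd :: "int \<Rightarrow> int \<Rightarrow> int \<Rightarrow> int \<Rightarrow> int \<Rightarrow> bool" where
  "dd N A B a b \<longleftrightarrow> N dvd (a * A + b * B)"

lemma dd_neg: "dd N A B (-a) b = dd N A B a (-b)"
proof -
  have "-a*A + b*B = -(a*A + (-b)*B)" by (simp add: algebra_simps)
  then show ?thesis unfolding dd_def by (simp only: dvd_minus_iff)
qed
lemma dd_neg0: "dd N A B 0 (-b) = dd N A B 0 b"
  unfolding dd_def by simp
lemma dd_mult: "dd N A B a b \<Longrightarrow> dd N A B (c*a) (c*b)"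
proof -
  assume "dd N A B a b"
  then have "N dvd c * (a*A + b*B)" unfolding dd_def by (rule dvd_mult)
  moreover have "c * (a*A + b*B) = c*a*A + c*b*B" by (simp add: algebra_simps)
  ultimately show ?thesis unfolding dd_def by simp
qed

lemma cw3: "set (map sab (cw 3)) = {(3,0),(-3,0),(0,3),(0,-3)}"
  by (simp add: cw_def fams_def succs_simps numeral_eq_Suc allowed_def sab_def) auto
lemma cw4: "set (map sab (cw 4)) = {(-4, 0), (-1, -1), (-1, 1), (0, -4), (0, 4), (1, -1), (1, 1), (4, 0)}"
  by (simp add: cw_def fams_def succs_simps numeral_eq_Suc allowed_def sab_def) auto
lemma cw5: "set (map sab (cw 5)) = {(-5, 0), (-2, -1), (-2, 1), (-1, -2), (-1, 2), (0, -5), (0, 5), (1, -2), (1, 2), (2, -1), (2, 1), (5, 0)}"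
  by (simp add: cw_def fams_def succs_simps numeral_eq_Suc allowed_def sab_def) auto
lemma cw6: "set (map sab (cw 6)) = {(-6, 0), (-3, -1), (-3, 1), (-2, -2), (-2, 2), (-1, -3), (-1, 3), (0, -6), (0, 6), (1, -3), (1, 3), (2, -2), (2, 2), (3, -1), (3, 1), (6, 0)}"
  by (simp add: cw_def fams_def succs_simps numeral_eq_Suc allowed_def sab_def) auto

lemma t5: "(\<forall>t::int. 1 \<le> t \<and> t \<le> 5 \<longrightarrow> P t) \<longleftrightarrow> P 1 \<and> P 2 \<and> P 3 \<and> P 4 \<and> P 5"
proof
  assume "P 1 \<and> P 2 \<and> P 3 \<and> P 4 \<and> P 5"
  moreover have "1 \<le> t \<and> t \<le> 5 \<Longrightarrow> t = 1 \<or> t = 2 \<or> t = 3 \<or> t = 4 \<or> t = 5" for t :: int by arith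
  ultimately show "\<forall>t::int. 1 \<le> t \<and> t \<le> 5 \<longrightarrow> P t" by blast
qed auto
lemma t6: "(\<forall>t::int. 1 \<le> t \<and> t \<le> 6 \<longrightarrow> P t) \<longleftrightarrow> P 1 \<and> P 2 \<and> P 3 \<and> P 4 \<and> P 5 \<and> P 6"
proof
  assume "P 1 \<and> P 2 \<and> P 3 \<and> P 4 \<and> P 5 \<and> P 6"
  moreover have "1 \<le> t \<and> t \<le> 6 \<Longrightarrow> t = 1 \<or> t = 2 \<or> t = 3 \<or> t = 4 \<or> t = 5 \<or> t = 6" for t :: int by arith
  ultimately show "\<forall>t::int. 1 \<le> t \<and> t \<le> 6 \<longrightarrow> P t" by blast
qed auto

lemma c0: "[t * A = 0] (mod N) \<longleftrightarrow> dd N A B t 0" by (simp add: dd_def cong_0_iff)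
lemma c0b: "[t * B = 0] (mod N) \<longleftrightarrow> dd N A B 0 t" by (simp add: dd_def cong_0_iff)
lemma cAB: "[A = a * B] (mod N) \<longleftrightarrow> dd N A B 1 (-a)" by (simp add: dd_def cong_iff_dvd_diff)
lemma cABm: "[A = - (a * B)] (mod N) \<longleftrightarrow> dd N A B 1 a" by (simp add: dd_def cong_iff_dvd_diff)
lemma cAB1: "[A = B] (mod N) \<longleftrightarrow> dd N A B 1 (-1)" by (simp add: dd_def cong_iff_dvd_diff)
lemma cAB1m: "[A = - B] (mod N) \<longleftrightarrow> dd N A B 1 1" by (simp add: dd_def cong_iff_dvd_diff)
lemma cBA: "[B = a * A] (mod N) \<longleftrightarrow> dd N A B a (-1)"
  by (simp add: dd_def cong_iff_dvd_diff dvd_diff_commute[of N B])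
lemma cBAm: "[B = - (a * A)] (mod N) \<longleftrightarrow> dd N A B a 1" by (simp add: dd_def cong_iff_dvd_diff add.commute)
lemma cAA: "[a * A = - (b * B)] (mod N) \<longleftrightarrow> dd N A B a b" by (simp add: dd_def cong_iff_dvd_diff)
lemma cAA2: "[a * A = b * B] (mod N) \<longleftrightarrow> dd N A B a (-b)" by (simp add: dd_def cong_iff_dvd_diff)

lemma ball_cw: "(\<forall>fs\<in>set (cw h). P (sab fs)) \<longleftrightarrow> (\<forall>p\<in>set (map sab (cw h)). P p)"
  by auto

lemma Q6_dd: "(\<forall>h. 3 \<le> h \<and> h < 6 \<longrightarrow> (\<forall>fs\<in>set (cw h). \<not> dd N A B (fst (sab fs)) (snd (sab fs)))) \<longleftrightarrow>
  \<not> dd N A B 3 0 \<and> \<not> dd N A B 0 3 \<and> \<not> dd N A B 4 0 \<and> \<not> dd N A B 0 4 \<and> \<not> dd N A B 5 0 \<and> \<not> dd N A B 0 5 \<and>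
  \<not> dd N A B 1 1 \<and> \<not> dd N A B 1 (-1) \<and> \<not> dd N A B 1 2 \<and> \<not> dd N A B 1 (-2) \<and> \<not> dd N A B 2 1 \<and> \<not> dd N A B 2 (-1)"
proof -
  have e: "(\<forall>h. 3 \<le> h \<and> h < 6 \<longrightarrow> P h) \<longleftrightarrow> P 3 \<and> P 4 \<and> P 5" for P :: "nat \<Rightarrow> bool"
    by (auto simp: less_Suc_eq numeral_eq_Suc)
  show ?thesis unfolding e ball_cw[where P="\<lambda>p. \<not> dd N A B (fst p) (snd p)"] cw3 cw4 cw5
    by (simp add: dd_neg dd_neg0 conj_ac)
qed

lemma Q7_dd: "(\<forall>h. 3 \<le> h \<and> h < 7 \<longrightarrow> (\<forall>fs\<in>set (cw h). \<not> dd N A B (fst (sab fs)) (snd (sab fs)))) \<longleftrightarrow>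
  \<not> dd N A B 3 0 \<and> \<not> dd N A B 0 3 \<and> \<not> dd N A B 4 0 \<and> \<not> dd N A B 0 4 \<and> \<not> dd N A B 5 0 \<and> \<not> dd N A B 0 5 \<and>
  \<not> dd N A B 1 1 \<and> \<not> dd N A B 1 (-1) \<and> \<not> dd N A B 1 2 \<and> \<not> dd N A B 1 (-2) \<and> \<not> dd N A B 2 1 \<and> \<not> dd N A B 2 (-1) \<and>
  \<not> dd N A B 6 0 \<and> \<not> dd N A B 0 6 \<and> \<not> dd N A B 3 1 \<and> \<not> dd N A B 3 (-1) \<and> \<not> dd N A B 1 3 \<and> \<not> dd N A B 1 (-3) \<and>
  \<not> dd N A B 2 2 \<and> \<not> dd N A B 2 (-2)"
proof -
  have e: "(\<forall>h. 3 \<le> h \<and> h < 7 \<longrightarrow> P h) \<longleftrightarrow> P 3 \<and> P 4 \<and> P 5 \<and> P 6" for P :: "nat \<Rightarrow> bool"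
    by (auto simp: less_Suc_eq numeral_eq_Suc)
  show ?thesis unfolding e ball_cw[where P="\<lambda>p. \<not> dd N A B (fst p) (snd p)"] cw3 cw4 cw5 cw6
    by (simp add: dd_neg dd_neg0 conj_ac)
qed


context HP begin

lemma mixB:
  assumes a: "(i + m) mod n = (j + k) mod n" and b: "(i + k) mod n = (j + m) mod n"
  shows "int n dvd (2 * (int k - int m))"
proof -
  from a have f1: "int n dvd (int (i+m) - int (j+k))" by (simp only: mod_eq_dvd)
  from b have f2: "int n dvd (int (i+k) - int (j+m))" by (simp only: mod_eq_dvd)
  have "int n dvd ((int (i+k) - int (j+m)) - (int (i+m) - int (j+k)))"
    by (rule dvd_diff[OF f2 f1])
  moreover have "(int (i+k) - int (j+m)) - (int (i+m) - int (j+k)) = 2 * (int k - int m)" by simp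
  ultimately show ?thesis by simp
qed

lemma mixA:
  assumes ij: "i < n" "j < n" and a: "(i + k) mod n = j" and b: "i = (j + k) mod n"
  shows "int n dvd (2 * int k)"
proof -
  from a ij have "(i + k) mod n = j mod n" by simp
  then have f1: "int n dvd (int (i+k) - int j)" by (simp only: mod_eq_dvd)
  from b ij have "i mod n = (j + k) mod n" by simp
  then have f2: "int n dvd (int i - int (j+k))" by (simp only: mod_eq_dvd)
  have "int n dvd ((int (i+k) - int j) - (int i - int (j+k)))"
    by (rule dvd_diff[OF f1 f2])
  moreover have "(int (i+k) - int j) - (int i - int (j+k)) = 2 * int k" by simp
  ultimately show ?thesis by simp
qed

fun o1 :: "fam \<Rightarrow> nat" where
  "o1 W1 = m" | "o1 W2 = k" | "o1 W3 = 0" | "o1 V1 = m" | "o1 V2 = 0" | "o1 V3 = k"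
fun s1 :: "fam \<Rightarrow> bool" where
  "s1 W1 = True" | "s1 W2 = False" | "s1 W3 = True" | "s1 V1 = False" | "s1 V2 = False" | "s1 V3 = True"
lemma wd_nth1: "i < n \<Longrightarrow> wd f i ! 1 = ((i + o1 f) mod n, s1 f)"
  by (cases f) auto

lemma fam_pairs: "f \<noteq> g \<Longrightarrow> hs f = hs g \<Longrightarrow> s1 f = s1 g \<Longrightarrow>
   (f = W2 \<and> g = V1) \<or> (f = V1 \<and> g = W2) \<or> (f = W3 \<and> g = V3) \<or> (f = V3 \<and> g = W3)"
  by (cases f; cases g) simp_all

lemma prefix2:
  assumes nA: "\<not> int n dvd (2 * int k)" and nB: "\<not> int n dvd (2 * (int k - int m))"
    and ij: "i < n" "j < n" and e0: "wd f i ! 0 = wd g j ! 0" and e1: "wd f i ! 1 = wd g j ! 1"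
  shows "wd f i = wd g j"
proof (cases "f = g")
  case True
  have "((i + oH f) mod n, hs f) = ((j + oH f) mod n, hs f)"
    using e0 unfolding wd_nth0[OF ij(1)] wd_nth0[OF ij(2)] True .
  then have "(i + oH f) mod n = (j + oH f) mod n" by (simp only: prod.inject)
  then have "i = j" by (rule mod_cancel_lt[OF ij])
  then show ?thesis using True by (simp only:)
next
  case False
  have "((i + oH f) mod n, hs f) = ((j + oH g) mod n, hs g)"
    using e0 unfolding wd_nth0[OF ij(1)] wd_nth0[OF ij(2)] .
  then have E0: "(i + oH f) mod n = (j + oH g) mod n" "hs f = hs g" by (simp_all only: prod.inject)
  have "((i + o1 f) mod n, s1 f) = ((j + o1 g) mod n, s1 g)"
    using e1 unfolding wd_nth1[OF ij(1)] wd_nth1[OF ij(2)] .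
  then have E1: "(i + o1 f) mod n = (j + o1 g) mod n" "s1 f = s1 g" by (simp_all only: prod.inject)
  from fam_pairs[OF False E0(2) E1(2)] have False
  proof (elim disjE conjE)
    assume "f = W2" "g = V1"
    then have "(i + m) mod n = (j + k) mod n" "(i + k) mod n = (j + m) mod n" using E0(1) E1(1) by simp_all
    then show False using mixB nB by blast
  next
    assume "f = V1" "g = W2"
    then have "(j + m) mod n = (i + k) mod n" "(j + k) mod n = (i + m) mod n" using E0(1) E1(1) by simp_all
    then show False using mixB nB by blast
  next
    assume "f = W3" "g = V3"
    then have "(i + k) mod n = j" "i = (j + k) mod n" using E0(1) E1(1) ij by simp_all
    then show False using mixA[OF ij] nA by blast
  next
    assume "f = V3" "g = W3"
    then have "(j + k) mod n = i" "j = (i + k) mod n" using E0(1) E1(1) ij by simp_all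
    then show False using mixA[OF ij(2,1)] nA by blast
  qed
  then show ?thesis ..
qed

lemma length_concat_le: "\<forall>b\<in>set bs. length b \<le> 1 \<Longrightarrow> length (concat bs) \<le> length bs"
  by (induction bs) auto

lemma condC:
  assumes nA: "\<not> int n dvd (2 * int k)" and nB: "\<not> int n dvd (2 * (int k - int m))"
  shows "cond_C S 3"
proof -
  have pc: "length b \<le> 1" if "is_piece S b" for b
  proof (rule ccontr)
    assume lb: "\<not> length b \<le> 1"
    from that obtain r1 r2 c1 c2 where r: "r1 \<in> S" "r2 \<in> S" "r1 \<noteq> r2" "r1 = b @ c1" "r2 = b @ c2"
      by (auto simp: is_piece_def)
    from r(1,2) obtain f i g j where fi: "i < n" "j < n" "r1 = wd f i" "r2 = wd g j"
      by (auto simp: S_char)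
    have lb2: "0 < length b" "1 < length b" using lb by auto
    have "r1 ! 0 = r2 ! 0" "r1 ! 1 = r2 ! 1" using lb2 r(4,5) by (simp_all add: nth_append)
    then have "wd f i ! 0 = wd g j ! 0" "wd f i ! 1 = wd g j ! 1" using fi(3,4) by simp_all
    then have "wd f i = wd g j" by (rule prefix2[OF nA nB fi(1,2)])
    then have "r1 = r2" using fi(3,4) by simp
    with r(3) show False by simp
  qed
  show ?thesis unfolding cond_C_def
  proof (intro ballI notI)
    fix r assume r: "r \<in> S" and "\<exists>bs. length bs < 3 \<and> (\<forall>b\<in>set bs. is_piece S b) \<and> r = concat bs"
    then obtain bs where bs: "length bs < 3" "\<forall>b\<in>set bs. is_piece S b" "r = concat bs" by blast
    have "\<forall>b\<in>set bs. length b \<le> 1" using bs(2) pc by blast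
    then have "length (concat bs) \<le> length bs" by (rule length_concat_le)
    then have "length r \<le> length bs" using bs(3) by simp
    moreover have "length r = 3" using r by (auto simp: S_char)
    ultimately show False using bs(1) by simp
  qed
qed

lemma cyc_W1: "i < n \<Longrightarrow> cyclically_reduced (wd W1 i) \<longleftrightarrow> (k mod n \<noteq> 0 \<and> k mod n \<noteq> m mod n)"
  using modk[of i k] modkm[of i k m] by (auto simp: cyclically_reduced_def fr_Cons2 fr_single)

lemma pres_iff:
  "C_T_presentation (H_gens n) (H_rels n m k) p q \<longleftrightarrow>
     (k mod n \<noteq> 0 \<and> k mod n \<noteq> m mod n) \<and> cond_C S p \<and> cond_T S q"
proof -
  have "(\<forall>r\<in>H_rels n m k. cyclically_reduced r \<and> fst ` set r \<subseteq> H_gens n) \<longleftrightarrow>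
        (k mod n \<noteq> 0 \<and> k mod n \<noteq> m mod n)"
  proof
    assume "\<forall>r\<in>H_rels n m k. cyclically_reduced r \<and> fst ` set r \<subseteq> H_gens n"
    then have "cyclically_reduced (wd W1 0)" using npos by (auto simp del: wd.simps simp: H_rels_eq)
    then show "k mod n \<noteq> 0 \<and> k mod n \<noteq> m mod n" using cyc_W1[OF npos] by simp
  next
    assume cr: "k mod n \<noteq> 0 \<and> k mod n \<noteq> m mod n"
    show "\<forall>r\<in>H_rels n m k. cyclically_reduced r \<and> fst ` set r \<subseteq> H_gens n"
    proof
      fix r assume "r \<in> H_rels n m k"
      then obtain i where i: "i < n" "r = wd W1 i" by (auto simp del: wd.simps simp: H_rels_eq)
      show "cyclically_reduced r \<and> fst ` set r \<subseteq> H_gens n"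
        using cyc_W1[OF i(1)] cr i npos by (auto simp: H_gens_def)
    qed
  qed
  then show ?thesis by (simp add: C_T_presentation_def)
qed

lemma wd_sp: "map snd (wd f i) = map snd (wd f 0)" by (cases f) auto
lemma wd_sp_fam: "map snd (wd f i) = map snd (wd g j) \<Longrightarrow> f = g" by (cases f; cases g) auto

lemma finite_fam: "finite (UNIV :: fam set)"
proof -
  have "UNIV = set fams" using fams_all by blast
  then show ?thesis by (metis finite_set)
qed

lemma finite_S: "finite S"
proof -
  have "S = (\<lambda>(f,i). wd f i) ` (UNIV \<times> {..<n})" by (auto simp: S_char)
  then show ?thesis using finite_fam by (simp add: finite_cartesian_product)
qed

lemma S_idx: "w \<in> S \<Longrightarrow> fst (w!0) < n \<and> fst (w!1) < n"
proof -
  assume "w \<in> S"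
  then obtain f i where "i < n" "w = wd f i" by (auto simp: S_char)
  then show ?thesis using npos by (cases f) simp_all
qed

lemma hs_set: "{f. hs f = b} = (if b then {W1,W2,V1} else {W3,V2,V3})"
  by (auto elim: hs.elims)

lemma out_deg: "card {w \<in> star_edges (H_rels n m k). star_tail w = v} \<le> 3"
proof -
  obtain a s where v: "v = (a, s)" by (cases v)
  let ?E = "{w \<in> star_edges (H_rels n m k). star_tail w = v}"
  let ?F = "{w \<in> S. w ! 0 = (a, \<not> s)}"
  have sub: "?E \<subseteq> ?F"
    by (auto simp: star_edges_def star_tail_def v linv_def prod_eq_iff)
  have finF: "finite ?F" using finite_S by simp
  have inj: "inj_on (map snd) ?F"
  proof
    fix x y assume x: "x \<in> ?F" and y: "y \<in> ?F" and e: "map snd x = map snd y"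
    from x obtain f i where xi: "i < n" "x = wd f i" by (auto simp: S_char)
    from y obtain g j where yj: "j < n" "y = wd g j" by (auto simp: S_char)
    have fg: "f = g" using e xi yj wd_sp_fam by simp
    have "(i + oH f) mod n = (j + oH f) mod n" using x y xi yj wd_nth0 fg by simp
    then have "i = j" by (rule mod_cancel_lt[OF xi(1) yj(1)])
    then show "x = y" using xi yj fg by simp
  qed
  have img: "map snd ` ?F \<subseteq> (\<lambda>f. map snd (wd f 0)) ` {f. hs f = (\<not> s)}"
  proof
    fix z assume "z \<in> map snd ` ?F"
    then obtain w where w: "w \<in> ?F" "z = map snd w" by auto
    from w obtain f i where fi: "i < n" "w = wd f i" by (auto simp: S_char)
    have "hs f = (\<not> s)" using w fi wd_nth0[OF fi(1), of f] by simp
    then show "z \<in> (\<lambda>f. map snd (wd f 0)) ` {f. hs f = (\<not> s)}" using w fi wd_sp by blast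
  qed
  have c3: "card {f. hs f = (\<not> s)} = 3" by (simp add: hs_set)
  have "card ?E \<le> card ?F" using sub finF by (rule card_mono[rotated])
  also have "\<dots> = card (map snd ` ?F)" using inj by (simp add: card_image)
  also have "\<dots> \<le> card ((\<lambda>f. map snd (wd f 0)) ` {f. hs f = (\<not> s)})"
    by (rule card_mono[OF _ img]) (simp add: hs_set)
  also have "\<dots> \<le> card {f. hs f = (\<not> s)}" by (rule card_image_le) (simp add: hs_set)
  finally show ?thesis using c3 by simp
qed

end

lemma small_n:
  fixes n :: nat and A B :: int
  assumes "2 \<le> n" "n \<le> 7"
    and "\<not> dd (int n) A B 1 0" "\<not> dd (int n) A B 2 0" "\<not> dd (int n) A B 3 0" "\<not> dd (int n) A B 4 0" "\<not> dd (int n) A B 5 0"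
    and "\<not> dd (int n) A B 0 1" "\<not> dd (int n) A B 0 2" "\<not> dd (int n) A B 0 3" "\<not> dd (int n) A B 0 4" "\<not> dd (int n) A B 0 5"
    and "\<not> dd (int n) A B 1 (-1)" "\<not> dd (int n) A B 1 1" "\<not> dd (int n) A B 1 (-2)" "\<not> dd (int n) A B 1 2"
    and "\<not> dd (int n) A B 2 (-1)" "\<not> dd (int n) A B 2 1"
  shows False
proof -
  have "n = 2 \<or> n = 3 \<or> n = 4 \<or> n = 5 \<or> n = 6 \<or> n = 7" using assms(1,2) by arith
  then show False using assms(3-) unfolding dd_def
    by (elim disjE) (simp_all, presburger+)
qed

context HP begin

lemma tail_head_V:
  assumes "w \<in> star_edges (H_rels n m k)"
  shows "star_tail w \<in> star_vertices (H_gens n)" "star_head w \<in> star_vertices (H_gens n)"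
proof -
  have "w \<in> S" using assms by (simp add: star_edges_def)
  from S_idx[OF this] show "star_tail w \<in> star_vertices (H_gens n)" "star_head w \<in> star_vertices (H_gens n)"
    by (auto simp: star_tail_def star_head_def star_vertices_def H_gens_def linv_def mem_Times_iff)
qed

lemma finite_E: "finite (star_edges (H_rels n m k))"
  using finite_S by (rule rev_finite_subset) (auto simp: star_edges_def)

lemma special_le7:
  assumes sp: "special_presentation (H_gens n) (H_rels n m k)"
  shows "n \<le> 7"
proof -
  let ?E = "star_edges (H_rels n m k)"
  let ?V = "star_vertices (H_gens n)"
  from conjunct2[OF sp[unfolded special_presentation_def]] obtain P L :: "nat set" and I
    and f :: "nat letter \<Rightarrow> nat + nat" and g
    where pp: "finite_projective_plane P L I" and fb: "bij_betw f ?V (P <+> L)"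
    and gb: "bij_betw g ?E (incidence_edges I)"
    and gw: "\<forall>w\<in>?E. g w = (f (star_tail w), f (star_head w))"
    by (elim exE conjE) (rule that; assumption)
  have finP: "finite P" and finL: "finite L" and IPL: "I \<subseteq> P \<times> L"
    and ax1: "\<forall>p\<in>P. \<forall>p'\<in>P. p \<noteq> p' \<longrightarrow> (\<exists>!l. l \<in> L \<and> (p, l) \<in> I \<and> (p', l) \<in> I)"
    and ax2: "\<forall>l\<in>L. \<forall>l'\<in>L. l \<noteq> l' \<longrightarrow> (\<exists>!p. p \<in> P \<and> (p, l) \<in> I \<and> (p, l') \<in> I)"
    using pp[unfolded finite_projective_plane_def]
    by (simp_all only: conj_assoc[symmetric]) (elim conjE; assumption)+
  have fsurj: "f ` ?V = P <+> L" using fb by (simp add: bij_betw_def)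
  have finj: "inj_on f ?V" using fb by (simp add: bij_betw_def)
  have gsurj: "g ` ?E = incidence_edges I" using gb by (simp add: bij_betw_def)
  have edge: "\<exists>w\<in>?E. f (star_tail w) = x \<and> f (star_head w) = y" if "(x, y) \<in> incidence_edges I" for x y
  proof -
    from that gsurj have "(x, y) \<in> g ` ?E" by simp
    then obtain w where "w \<in> ?E" "(x, y) = g w" by blast
    then show ?thesis using gw by auto
  qed
  have degP: "card {l. (p,l) \<in> I} \<le> 3" for p
  proof (cases "\<exists>l. (p,l) \<in> I")
    case False then show ?thesis by simp
  next
    case True
    then have "p \<in> P" using IPL by auto
    then have "Inl p \<in> f ` ?V" using fsurj by auto
    then obtain v where v: "v \<in> ?V" "f v = Inl p" by auto
    have "{l. (p,l) \<in> I} \<subseteq> (\<lambda>w. projr (f (star_head w))) ` {w \<in> ?E. star_tail w = v}"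
    proof
      fix l assume "l \<in> {l. (p,l) \<in> I}"
      then have "(Inl p, Inr l) \<in> incidence_edges I" by (auto simp: incidence_edges_def)
      from edge[OF this] obtain w where w: "w \<in> ?E" "f (star_tail w) = Inl p" "f (star_head w) = Inr l"
        by blast
      have "f (star_tail w) = f v" using w(2) v(2) by simp
      then have "star_tail w = v" by (rule inj_onD[OF finj _ tail_head_V(1)[OF w(1)] v(1)])
      then show "l \<in> (\<lambda>w. projr (f (star_head w))) ` {w \<in> ?E. star_tail w = v}"
        using w by force
    qed
    then have "card {l. (p,l) \<in> I} \<le> card ((\<lambda>w. projr (f (star_head w))) ` {w \<in> ?E. star_tail w = v})"
      by (rule card_mono[rotated]) (use finite_E in simp)
    also have "\<dots> \<le> card {w \<in> ?E. star_tail w = v}" by (rule card_image_le) (use finite_E in simp)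
    also have "\<dots> \<le> 3" by (rule out_deg)
    finally show ?thesis .
  qed
  have degL: "card {p. (p,l) \<in> I} \<le> 3" for l
  proof (cases "\<exists>p. (p,l) \<in> I")
    case False then show ?thesis by simp
  next
    case True
    then have "l \<in> L" using IPL by auto
    then have "Inr l \<in> f ` ?V" using fsurj by auto
    then obtain v where v: "v \<in> ?V" "f v = Inr l" by auto
    have "{p. (p,l) \<in> I} \<subseteq> (\<lambda>w. projl (f (star_head w))) ` {w \<in> ?E. star_tail w = v}"
    proof
      fix p assume "p \<in> {p. (p,l) \<in> I}"
      then have "(Inr l, Inl p) \<in> incidence_edges I" by (auto simp: incidence_edges_def)
      from edge[OF this] obtain w where w: "w \<in> ?E" "f (star_tail w) = Inr l" "f (star_head w) = Inl p"
        by blast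
      have "f (star_tail w) = f v" using w(2) v(2) by simp
      then have "star_tail w = v" by (rule inj_onD[OF finj _ tail_head_V(1)[OF w(1)] v(1)])
      then show "p \<in> (\<lambda>w. projl (f (star_head w))) ` {w \<in> ?E. star_tail w = v}"
        using w by force
    qed
    then have "card {p. (p,l) \<in> I} \<le> card ((\<lambda>w. projl (f (star_head w))) ` {w \<in> ?E. star_tail w = v})"
      by (rule card_mono[rotated]) (use finite_E in simp)
    also have "\<dots> \<le> card {w \<in> ?E. star_tail w = v}" by (rule card_image_le) (use finite_E in simp)
    also have "\<dots> \<le> 3" by (rule out_deg)
    finally show ?thesis .
  qed
  have cardP: "card P \<le> 7"
  proof (cases "P = {}")
    case True then show ?thesis by simp
  next
    case False
    then obtain p0 where p0: "p0 \<in> P" by auto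
    let ?Lp = "{l. (p0,l) \<in> I}"
    let ?U = "\<Union>l\<in>?Lp. {p. (p,l) \<in> I} - {p0}"
    have finLp: "finite ?Lp" using finL IPL by (auto intro: rev_finite_subset)
    have sub: "P \<subseteq> insert p0 ?U"
    proof
      fix p assume p: "p \<in> P"
      show "p \<in> insert p0 ?U"
      proof (cases "p = p0")
        case False
        have "\<exists>!l. l \<in> L \<and> (p, l) \<in> I \<and> (p0, l) \<in> I" using ax1 p p0 False by blast
        then obtain l where "l \<in> L" "(p,l) \<in> I" "(p0,l) \<in> I" by blast
        then show ?thesis using False by blast
      qed simp
    qed
    have c2: "card ({p. (p,l) \<in> I} - {p0}) \<le> 2" if "l \<in> ?Lp" for l
    proof -
      have fin: "finite {p. (p,l) \<in> I}" using finP IPL by (auto intro: rev_finite_subset)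
      have "p0 \<in> {p. (p,l) \<in> I}" using that by simp
      then have "card ({p. (p,l) \<in> I} - {p0}) = card {p. (p,l) \<in> I} - 1" using fin by simp
      then show ?thesis using degL[of l] by simp
    qed
    have "card ?U \<le> (\<Sum>l\<in>?Lp. card ({p. (p,l) \<in> I} - {p0}))" by (rule card_UN_le[OF finLp])
    also have "\<dots> \<le> card ?Lp * 2" using sum_bounded_above[of ?Lp "\<lambda>l. card ({p. (p,l) \<in> I} - {p0})" 2] c2
      by simp
    also have "\<dots> \<le> 6" using degP[of p0] by simp
    finally have "card ?U \<le> 6" .
    have finU: "finite ?U" using finP IPL finLp by (auto intro: rev_finite_subset)
    have "card P \<le> card (insert p0 ?U)" by (rule card_mono[OF _ sub]) (use finU in simp)
    also have "\<dots> \<le> Suc (card ?U)" by (rule card_insert_le_m1) simp_all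
    finally show ?thesis using \<open>card ?U \<le> 6\<close> by simp
  qed
  have cardL: "card L \<le> 7"
  proof (cases "L = {}")
    case True then show ?thesis by simp
  next
    case False
    then obtain l0 where l0: "l0 \<in> L" by auto
    let ?Pl = "{p. (p,l0) \<in> I}"
    let ?U = "\<Union>p\<in>?Pl. {l. (p,l) \<in> I} - {l0}"
    have finPl: "finite ?Pl" using finP IPL by (auto intro: rev_finite_subset)
    have sub: "L \<subseteq> insert l0 ?U"
    proof
      fix l assume l: "l \<in> L"
      show "l \<in> insert l0 ?U"
      proof (cases "l = l0")
        case False
        have "\<exists>!p. p \<in> P \<and> (p, l) \<in> I \<and> (p, l0) \<in> I" using ax2 l l0 False by blast
        then obtain p where "p \<in> P" "(p,l) \<in> I" "(p,l0) \<in> I" by blast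
        then show ?thesis using False by blast
      qed simp
    qed
    have c2: "card ({l. (p,l) \<in> I} - {l0}) \<le> 2" if "p \<in> ?Pl" for p
    proof -
      have fin: "finite {l. (p,l) \<in> I}" using finL IPL by (auto intro: rev_finite_subset)
      have "l0 \<in> {l. (p,l) \<in> I}" using that by simp
      then have "card ({l. (p,l) \<in> I} - {l0}) = card {l. (p,l) \<in> I} - 1" using fin by simp
      then show ?thesis using degP[of p] by simp
    qed
    have "card ?U \<le> (\<Sum>p\<in>?Pl. card ({l. (p,l) \<in> I} - {l0}))" by (rule card_UN_le[OF finPl])
    also have "\<dots> \<le> card ?Pl * 2" using sum_bounded_above[of ?Pl "\<lambda>p. card ({l. (p,l) \<in> I} - {l0})" 2] c2
      by simp
    also have "\<dots> \<le> 6" using degL[of l0] by simp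
    finally have "card ?U \<le> 6" .
    have finU: "finite ?U" using finL IPL finPl by (auto intro: rev_finite_subset)
    have "card L \<le> card (insert l0 ?U)" by (rule card_mono[OF _ sub]) (use finU in simp)
    also have "\<dots> \<le> Suc (card ?U)" by (rule card_insert_le_m1) simp_all
    finally show ?thesis using \<open>card ?U \<le> 6\<close> by simp
  qed
  have "card ?V = card (P <+> L)" using fb by (rule bij_betw_same_card)
  also have "\<dots> = card P + card L" using finP finL by (rule card_Plus)
  finally have "card ?V \<le> 14" using cardP cardL by simp
  moreover have "card ?V = 2 * n"
    by (simp add: star_vertices_def H_gens_def card_cartesian_product)
  ultimately show ?thesis by simp
qed

end

theorem theorem6p1:
  fixes n m k :: nat and A B :: int
  assumes "2 \<le> n" and "1 \<le> m" and "m \<le> n" and "1 \<le> k" and "k \<le> n"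
  defines "A \<equiv> int k" and "B \<equiv> int k - int m"
  shows
    "(C_T_presentation (H_gens n) (H_rels n m k) 3 6 \<longleftrightarrow>
       (\<forall>t::int. 1 \<le> t \<and> t \<le> 5 \<longrightarrow>
          \<not> [t * A = 0] (mod int n) \<and> \<not> [t * B = 0] (mod int n)) \<and>
       \<not> [A = B] (mod int n) \<and> \<not> [A = - B] (mod int n) \<and>
       \<not> [A = 2 * B] (mod int n) \<and> \<not> [A = - (2 * B)] (mod int n) \<and>
       \<not> [B = 2 * A] (mod int n) \<and> \<not> [B = - (2 * A)] (mod int n)) \<and>
     (C_T_presentation (H_gens n) (H_rels n m k) 3 6 \<longrightarrow>
       \<not> special_presentation (H_gens n) (H_rels n m k)) \<and>
     (C_T_presentation (H_gens n) (H_rels n m k) 3 7 \<longleftrightarrow>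
       (\<forall>t::int. 1 \<le> t \<and> t \<le> 6 \<longrightarrow>
          \<not> [t * A = 0] (mod int n) \<and> \<not> [t * B = 0] (mod int n)) \<and>
       \<not> [A = 2 * B] (mod int n) \<and> \<not> [A = - (2 * B)] (mod int n) \<and>
       \<not> [A = 3 * B] (mod int n) \<and> \<not> [A = - (3 * B)] (mod int n) \<and>
       \<not> [B = 2 * A] (mod int n) \<and> \<not> [B = - (2 * A)] (mod int n) \<and>
       \<not> [B = 3 * A] (mod int n) \<and> \<not> [B = - (3 * A)] (mod int n) \<and>
       \<not> [2 * A = 2 * B] (mod int n) \<and> \<not> [2 * A = - (2 * B)] (mod int n))"
proof -
  interpret HP n m k using assms(1) by unfold_locales simp
  let ?N = "int n"
  have AB: "int k = A" "int k - int m = B" using A_def B_def by simp_all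
  have cr_iff: "(k mod n \<noteq> 0 \<and> k mod n \<noteq> m mod n) \<longleftrightarrow> \<not> dd ?N A B 1 0 \<and> \<not> dd ?N A B 0 1"
  proof -
    have "k mod n = 0 \<longleftrightarrow> ?N dvd A" using AB(1) by (metis dvd_eq_mod_eq_0 of_nat_dvd_iff)
    moreover have "k mod n = m mod n \<longleftrightarrow> ?N dvd B" using AB(2) mod_eq_dvd by simp
    ultimately show ?thesis by (simp add: dd_def)
  qed
  have T_dd: "cond_T S q \<longleftrightarrow> (\<forall>h. 3 \<le> h \<and> h < q \<longrightarrow>
      (\<forall>fs\<in>set (cw h). \<not> dd ?N A B (fst (sab fs)) (snd (sab fs))))"
    if "k mod n \<noteq> 0 \<and> k mod n \<noteq> m mod n" for q
    using T_iff[of q] that unfolding dd_def AB(2) unfolding AB(1) by simp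
  have C_dd: "cond_C S 3" if "\<not> dd ?N A B 2 0" "\<not> dd ?N A B 0 2"
    using condC that unfolding dd_def AB(2) unfolding AB(1) by simp
  have P: "C_T_presentation (H_gens n) (H_rels n m k) 3 q \<longleftrightarrow>
     (k mod n \<noteq> 0 \<and> k mod n \<noteq> m mod n) \<and> cond_C S 3 \<and> cond_T S q" for q
    by (rule pres_iff)
  have m2: "dd ?N A B a b \<Longrightarrow> dd ?N A B (2*a) (2*b)" for a b by (rule dd_mult)
  have m3: "dd ?N A B a b \<Longrightarrow> dd ?N A B (3*a) (3*b)" for a b by (rule dd_mult)
  have RA: "((\<forall>t::int. 1 \<le> t \<and> t \<le> 5 \<longrightarrow>
          \<not> [t * A = 0] (mod int n) \<and> \<not> [t * B = 0] (mod int n)) \<and>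
       \<not> [A = B] (mod int n) \<and> \<not> [A = - B] (mod int n) \<and>
       \<not> [A = 2 * B] (mod int n) \<and> \<not> [A = - (2 * B)] (mod int n) \<and>
       \<not> [B = 2 * A] (mod int n) \<and> \<not> [B = - (2 * A)] (mod int n)) \<longleftrightarrow>
     (\<not> dd ?N A B 1 0 \<and> \<not> dd ?N A B 0 1 \<and> \<not> dd ?N A B 2 0 \<and> \<not> dd ?N A B 0 2 \<and>
      \<not> dd ?N A B 3 0 \<and> \<not> dd ?N A B 0 3 \<and> \<not> dd ?N A B 4 0 \<and> \<not> dd ?N A B 0 4 \<and>
      \<not> dd ?N A B 5 0 \<and> \<not> dd ?N A B 0 5 \<and>
      \<not> dd ?N A B 1 (-1) \<and> \<not> dd ?N A B 1 1 \<and> \<not> dd ?N A B 1 (-2) \<and> \<not> dd ?N A B 1 2 \<and>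
      \<not> dd ?N A B 2 (-1) \<and> \<not> dd ?N A B 2 1)"
    unfolding t5 c0[of _ A _ B] c0b[of _ B _ A] cAB1[of A B] cAB1m[of A B] cAB[of A _ B] cABm[of A _ B]
      cBA[of B _ A] cBAm[of B _ A]
    by argo
  have RB: "((\<forall>t::int. 1 \<le> t \<and> t \<le> 6 \<longrightarrow>
          \<not> [t * A = 0] (mod int n) \<and> \<not> [t * B = 0] (mod int n)) \<and>
       \<not> [A = 2 * B] (mod int n) \<and> \<not> [A = - (2 * B)] (mod int n) \<and>
       \<not> [A = 3 * B] (mod int n) \<and> \<not> [A = - (3 * B)] (mod int n) \<and>
       \<not> [B = 2 * A] (mod int n) \<and> \<not> [B = - (2 * A)] (mod int n) \<and>
       \<not> [B = 3 * A] (mod int n) \<and> \<not> [B = - (3 * A)] (mod int n) \<and>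
       \<not> [2 * A = 2 * B] (mod int n) \<and> \<not> [2 * A = - (2 * B)] (mod int n)) \<longleftrightarrow>
     (\<not> dd ?N A B 1 0 \<and> \<not> dd ?N A B 0 1 \<and> \<not> dd ?N A B 2 0 \<and> \<not> dd ?N A B 0 2 \<and>
      \<not> dd ?N A B 3 0 \<and> \<not> dd ?N A B 0 3 \<and> \<not> dd ?N A B 4 0 \<and> \<not> dd ?N A B 0 4 \<and>
      \<not> dd ?N A B 5 0 \<and> \<not> dd ?N A B 0 5 \<and> \<not> dd ?N A B 6 0 \<and> \<not> dd ?N A B 0 6 \<and>
      \<not> dd ?N A B 1 (-2) \<and> \<not> dd ?N A B 1 2 \<and> \<not> dd ?N A B 1 (-3) \<and> \<not> dd ?N A B 1 3 \<and>
      \<not> dd ?N A B 2 (-1) \<and> \<not> dd ?N A B 2 1 \<and> \<not> dd ?N A B 3 (-1) \<and> \<not> dd ?N A B 3 1 \<and>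
      \<not> dd ?N A B 2 (-2) \<and> \<not> dd ?N A B 2 2)"
    unfolding t6 c0[of _ A _ B] c0b[of _ B _ A] cAB[of A _ B] cABm[of A _ B]
      cBA[of B _ A] cBAm[of B _ A] cAA2[of _ A _ B] cAA[of _ A _ B]
    by argo
  have partA: "C_T_presentation (H_gens n) (H_rels n m k) 3 6 \<longleftrightarrow>
     (\<not> dd ?N A B 1 0 \<and> \<not> dd ?N A B 0 1 \<and> \<not> dd ?N A B 2 0 \<and> \<not> dd ?N A B 0 2 \<and>
      \<not> dd ?N A B 3 0 \<and> \<not> dd ?N A B 0 3 \<and> \<not> dd ?N A B 4 0 \<and> \<not> dd ?N A B 0 4 \<and>
      \<not> dd ?N A B 5 0 \<and> \<not> dd ?N A B 0 5 \<and>
      \<not> dd ?N A B 1 (-1) \<and> \<not> dd ?N A B 1 1 \<and> \<not> dd ?N A B 1 (-2) \<and> \<not> dd ?N A B 1 2 \<and>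
      \<not> dd ?N A B 2 (-1) \<and> \<not> dd ?N A B 2 1)" (is "?L \<longleftrightarrow> ?R")
  proof
    assume L: ?L
    then have cr: "k mod n \<noteq> 0 \<and> k mod n \<noteq> m mod n" and T: "cond_T S 6" using P by blast+
    have Q: "\<not> dd ?N A B 3 0 \<and> \<not> dd ?N A B 0 3 \<and> \<not> dd ?N A B 4 0 \<and> \<not> dd ?N A B 0 4 \<and> \<not> dd ?N A B 5 0 \<and> \<not> dd ?N A B 0 5 \<and>
  \<not> dd ?N A B 1 1 \<and> \<not> dd ?N A B 1 (-1) \<and> \<not> dd ?N A B 1 2 \<and> \<not> dd ?N A B 1 (-2) \<and> \<not> dd ?N A B 2 1 \<and> \<not> dd ?N A B 2 (-1)"
      by (rule iffD1[OF Q6_dd[of "int n" A B] iffD1[OF T_dd[OF cr, of 6] T]])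
    have "\<not> dd ?N A B 2 0" using Q m2[of 2 0] by auto
    moreover have "\<not> dd ?N A B 0 2" using Q m2[of 0 2] by auto
    moreover have crd: "\<not> dd ?N A B 1 0 \<and> \<not> dd ?N A B 0 1" by (rule iffD1[OF cr_iff cr])
    ultimately show ?R using Q by argo
  next
    assume R: ?R
    have cr: "k mod n \<noteq> 0 \<and> k mod n \<noteq> m mod n" by (rule iffD2[OF cr_iff]) (use R in argo)
    have C: "cond_C S 3" using C_dd R by argo
    have T: "cond_T S 6"
      by (rule iffD2[OF T_dd[OF cr, of 6] iffD2[OF Q6_dd[of "int n" A B]]]) (use R in argo)
    show ?L using P cr C T by blast
  qed
  have partB: "C_T_presentation (H_gens n) (H_rels n m k) 3 7 \<longleftrightarrow>
     (\<not> dd ?N A B 1 0 \<and> \<not> dd ?N A B 0 1 \<and> \<not> dd ?N A B 2 0 \<and> \<not> dd ?N A B 0 2 \<and>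
      \<not> dd ?N A B 3 0 \<and> \<not> dd ?N A B 0 3 \<and> \<not> dd ?N A B 4 0 \<and> \<not> dd ?N A B 0 4 \<and>
      \<not> dd ?N A B 5 0 \<and> \<not> dd ?N A B 0 5 \<and> \<not> dd ?N A B 6 0 \<and> \<not> dd ?N A B 0 6 \<and>
      \<not> dd ?N A B 1 (-2) \<and> \<not> dd ?N A B 1 2 \<and> \<not> dd ?N A B 1 (-3) \<and> \<not> dd ?N A B 1 3 \<and>
      \<not> dd ?N A B 2 (-1) \<and> \<not> dd ?N A B 2 1 \<and> \<not> dd ?N A B 3 (-1) \<and> \<not> dd ?N A B 3 1 \<and>
      \<not> dd ?N A B 2 (-2) \<and> \<not> dd ?N A B 2 2)" (is "?L \<longleftrightarrow> ?R")
  proof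
    assume L: ?L
    then have cr: "k mod n \<noteq> 0 \<and> k mod n \<noteq> m mod n" and T: "cond_T S 7" using P by blast+
    have Q: "\<not> dd ?N A B 3 0 \<and> \<not> dd ?N A B 0 3 \<and> \<not> dd ?N A B 4 0 \<and> \<not> dd ?N A B 0 4 \<and> \<not> dd ?N A B 5 0 \<and> \<not> dd ?N A B 0 5 \<and>
  \<not> dd ?N A B 1 1 \<and> \<not> dd ?N A B 1 (-1) \<and> \<not> dd ?N A B 1 2 \<and> \<not> dd ?N A B 1 (-2) \<and> \<not> dd ?N A B 2 1 \<and> \<not> dd ?N A B 2 (-1) \<and>
  \<not> dd ?N A B 6 0 \<and> \<not> dd ?N A B 0 6 \<and> \<not> dd ?N A B 3 1 \<and> \<not> dd ?N A B 3 (-1) \<and> \<not> dd ?N A B 1 3 \<and> \<not> dd ?N A B 1 (-3) \<and>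
  \<not> dd ?N A B 2 2 \<and> \<not> dd ?N A B 2 (-2)"
      by (rule iffD1[OF Q7_dd[of "int n" A B] iffD1[OF T_dd[OF cr, of 7] T]])
    have "\<not> dd ?N A B 2 0" using Q m2[of 2 0] by auto
    moreover have "\<not> dd ?N A B 0 2" using Q m2[of 0 2] by auto
    moreover have crd: "\<not> dd ?N A B 1 0 \<and> \<not> dd ?N A B 0 1" by (rule iffD1[OF cr_iff cr])
    ultimately show ?R using Q by argo
  next
    assume R: ?R
    have cr: "k mod n \<noteq> 0 \<and> k mod n \<noteq> m mod n" by (rule iffD2[OF cr_iff]) (use R in argo)
    have C: "cond_C S 3" using C_dd R by argo
    have "\<not> dd ?N A B 1 1" using R m2[of 1 1] by auto
    moreover have "\<not> dd ?N A B 1 (-1)" using R m2[of 1 "-1"] by auto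
    ultimately have T: "cond_T S 7"
      by (intro iffD2[OF T_dd[OF cr, of 7] iffD2[OF Q7_dd[of "int n" A B]]]) (use R in argo)
    show ?L using P cr C T by blast
  qed
  have spec: "\<not> special_presentation (H_gens n) (H_rels n m k)"
    if L: "C_T_presentation (H_gens n) (H_rels n m k) 3 6"
  proof
    assume sp: "special_presentation (H_gens n) (H_rels n m k)"
    have "n \<le> 7" by (rule special_le7[OF sp])
    then show False using small_n[of n A B] assms(1) L partA by blast
  qed
  show ?thesis using partA partB RA RB spec by argo
qed

end
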